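(* Let $b^2>a^2>0$, $\theta\in[0,1]$, and let $u$ solve $$u_{tt}-a^2\Delta u-(b^2-a^2)\nabla\operatorname{div}u+(-\Delta)^{\theta}u_t=0\ \text{ on }(0,\infty)\times\mathbb{R}^3,\qquad (u,u_t)(0,\cdot)=(u_0,u_1).$$ Let $\hat u(t,\xi)$ be its partial Fourier transform in $x$ and $$E_{\rm pha}(\hat u)(t,\xi):=|\hat u_t(t,\xi)|^2+a^2|\xi|^2|\hat u(t,\xi)|^2+(b^2-a^2)|\xi\cdot\hat u(t,\xi)|^2 .$$ Then for a sufficiently small constant $\varepsilon>0$ there is $c>0$ such that for all $t\ge0$ $$E_{\rm pha}(\hat u)(t,\xi)\lesssim\begin{cases}e^{-c|\xi|^{2\max\{1-\theta;\theta\}}t}E_{\rm pha}(\hat u)(0,\xi)&\text{if }|\xi|<\varepsilon,\\ e^{-ct}E_{\rm pha}(\hat u)(0,\xi)&\text{if }|\xi|\ge\varepsilon.\end{cases}$$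
   Context: $(-\Delta)^\theta$ is the Fourier multiplier with symbol $|\xi|^{2\theta}$; $\xi\cdot\hat u$ is the (bilinear) inner product in $\mathbb{C}^3$. $\lesssim$ hides a constant independent of $t,\xi$ and data. *)

theory Defs
  imports "HOL-Analysis.Analysis"
begin

text \<open>Symbol of the fractional Laplacian (-Delta)^theta, i.e. |xi|^(2 theta),
  with the convention |xi|^0 = 1 (so (-Delta)^0 is the identity).\<close>
definition frac_symbol :: "real \<Rightarrow> real^3 \<Rightarrow> real" where
  "frac_symbol \<theta> \<xi> = (if \<theta> = 0 then 1 else norm \<xi> powr (2 * \<theta>))"

definition bdot :: "real^3 \<Rightarrow> complex^3 \<Rightarrow> complex" where
  "bdot \<xi> v = (\<Sum>i\<in>UNIV. complex_of_real (\<xi> $ i) * v $ i)"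

text \<open>Phase-space energy E_pha(u^)(t,xi) in terms of u^(t,xi) = U and u^_t(t,xi) = V.\<close>
definition E_pha :: "real \<Rightarrow> real \<Rightarrow> real^3 \<Rightarrow> complex^3 \<Rightarrow> complex^3 \<Rightarrow> real" where
  "E_pha a b \<xi> U V = (norm V)\<^sup>2 + a\<^sup>2 * (norm \<xi>)\<^sup>2 * (norm U)\<^sup>2
      + (b\<^sup>2 - a\<^sup>2) * (cmod (bdot \<xi> U))\<^sup>2"

text \<open>Partial Fourier transform (in x) of the damped Lame system at a fixed frequency xi:
  u^_tt + a^2 |xi|^2 u^ + (b^2 - a^2) xi (xi . u^) + |xi|^(2 theta) u^_t = 0.\<close>
definition lame_fourier_rhs ::
  "real \<Rightarrow> real \<Rightarrow> real \<Rightarrow> real^3 \<Rightarrow> complex^3 \<Rightarrow> complex^3 \<Rightarrow> complex^3" where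
  "lame_fourier_rhs a b \<theta> \<xi> U V =
     (\<chi> i. complex_of_real (a\<^sup>2 * (norm \<xi>)\<^sup>2) * U $ i
          + complex_of_real ((b\<^sup>2 - a\<^sup>2) * \<xi> $ i) * bdot \<xi> U
          + complex_of_real (frac_symbol \<theta> \<xi>) * V $ i)"

end

theory Submission
  imports Defs
begin

definition En :: "real \<Rightarrow> real \<Rightarrow> ('a::real_inner \<Rightarrow> 'b::real_inner) \<Rightarrow> 'a \<Rightarrow> 'a \<Rightarrow> real" where
  "En \<mu> \<beta> B u v = inner v v + \<mu> * inner u u + \<beta> * inner (B u) (B u)"

lemma inner_deriv:
  assumes "(f has_vector_derivative f') (at t)" "(g has_vector_derivative g') (at t)"
  shows "((\<lambda>x. inner (f x) (g x)) has_real_derivative (inner (f t) g' + inner f' (g t))) (at t)"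
  using bounded_bilinear.has_vector_derivative[OF bounded_bilinear_inner assms]
  by (simp add: has_real_derivative_iff_has_vector_derivative)

lemma En_bounds:
  fixes u v :: "'a::real_inner" and B :: "'a \<Rightarrow> 'b::real_inner"
  assumes "0 \<le> \<mu>" "0 \<le> \<beta>" "0 \<le> \<kappa>" "\<kappa> \<le> sqrt \<mu> / 2"
  shows "En \<mu> \<beta> B u v / 2 \<le> En \<mu> \<beta> B u v + 2 * \<kappa> * inner u v
     \<and> En \<mu> \<beta> B u v + 2 * \<kappa> * inner u v \<le> 3/2 * En \<mu> \<beta> B u v"
proof -
  define x where "x = norm v"
  define y where "y = norm u"
  have p: "\<bar>inner u v\<bar> \<le> y * x" unfolding x_def y_def by (rule Cauchy_Schwarz_ineq2)
  have s: "inner (B u) (B u) \<ge> 0" by simp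
  have vv: "inner v v = x\<^sup>2" "inner u u = y\<^sup>2" unfolding x_def y_def by (simp_all add: power2_norm_eq_inner)
  have xy: "x \<ge> 0" "y \<ge> 0" unfolding x_def y_def by auto
  have sq: "sqrt \<mu> ^ 2 = \<mu>" using assms by simp
  have "0 \<le> (x - sqrt \<mu> * y)\<^sup>2" by simp
  hence "2 * sqrt \<mu> * x * y \<le> x\<^sup>2 + \<mu> * y\<^sup>2" using sq by (simp add: power2_eq_square algebra_simps)
  moreover have "4 * \<kappa> * (x * y) \<le> 2 * sqrt \<mu> * (x * y)"
    using assms xy by (intro mult_right_mono) auto
  moreover have "\<bar>2 * \<kappa> * inner u v\<bar> \<le> 2 * \<kappa> * (y * x)"
  proof -
    have "\<kappa> * \<bar>inner u v\<bar> \<le> \<kappa> * (y * x)" using p assms by (intro mult_left_mono) auto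
    thus ?thesis using assms by (simp add: abs_mult)
  qed
  moreover have "\<beta> * inner (B u) (B u) \<ge> 0" using assms s by simp
  ultimately show ?thesis unfolding En_def vv by (auto simp: algebra_simps abs_le_iff)
qed

lemma deriv_bound:
  fixes u v :: "'a::real_inner" and B :: "'a \<Rightarrow> 'b::real_inner"
  assumes "0 \<le> \<mu>" "0 \<le> \<beta>" "0 \<le> d" "0 \<le> \<kappa>" "\<kappa> \<le> d/2" "2*\<kappa>*d \<le> \<mu>"
  shows "-2*d*inner v v + 2*\<kappa>*(inner v v - (\<mu> * inner u u + \<beta> * inner (B u) (B u)) - d * inner u v)
         \<le> - \<kappa> * En \<mu> \<beta> B u v"
proof -
  define x where "x = norm v"
  define y where "y = norm u"
  have p: "\<bar>inner u v\<bar> \<le> y * x" unfolding x_def y_def by (rule Cauchy_Schwarz_ineq2)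
  have s: "\<kappa> * (\<beta> * inner (B u) (B u)) \<ge> 0" using assms by simp
  have vv: "inner v v = x\<^sup>2" "inner u u = y\<^sup>2" unfolding x_def y_def by (simp_all add: power2_norm_eq_inner)
  have xy: "x \<ge> 0" "y \<ge> 0" unfolding x_def y_def by auto
  have "0 \<le> d/2 * (x - 2*\<kappa>*y)\<^sup>2" using assms by simp
  hence h1: "2*\<kappa>*d*(x*y) \<le> d/2*x\<^sup>2 + 2*\<kappa>^2*d*y\<^sup>2" by (simp add: power2_eq_square algebra_simps)
  have h2: "(2*\<kappa>*d) * (-(y*x)) \<le> (2*\<kappa>*d) * inner u v"
  proof -
    have "inner u v \<ge> - (y*x)" using p by auto
    thus ?thesis using assms by (intro mult_left_mono) auto
  qed
  have yx: "y*x = x*y" by simp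
  have h3: "\<kappa> * (2*\<kappa>*d) * y\<^sup>2 \<le> \<kappa> * \<mu> * y\<^sup>2" using assms by (intro mult_right_mono mult_left_mono) auto
  have h4: "(3*\<kappa>) * x\<^sup>2 \<le> (3/2*d) * x\<^sup>2" using assms by (intro mult_right_mono) auto
  show ?thesis unfolding En_def vv using h1 h2 h3 h4 s yx
    by (simp add: algebra_simps power2_eq_square)
qed

lemma alg_id:
  fixes vw :: real
  assumes "vw = wv" "vu = uv" "bvu = buv" "uw = wu" "wv = -(mu*uv+be*buv) - d * vv" "wu = -(mu*uu + be*bu) - d*uv"
  shows "(vw + wv) + mu*(uv+vu) + be*(buv+bvu) + 2*k*(uw+vv) = -2*d * vv + 2*k*(vv - (mu*uu + be*bu) - d*uv)"
  unfolding assms(1-4) unfolding assms(5,6) by (simp add: algebra_simps)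

lemma decay:
  fixes U V W :: "real \<Rightarrow> 'a::real_inner" and B :: "'a \<Rightarrow> 'b::real_inner"
  assumes B: "bounded_linear B"
    and pars: "0 \<le> \<mu>" "0 \<le> \<beta>" "0 \<le> d" "0 \<le> \<kappa>" "\<kappa> \<le> d/2" "2*\<kappa>*d \<le> \<mu>" "\<kappa> \<le> sqrt \<mu> / 2"
    and dU: "\<forall>t\<ge>0. (U has_vector_derivative V t) (at t within {0..})"
    and cV: "continuous_on {0..} V"
    and dV: "\<forall>t>0. (V has_vector_derivative W t) (at t)"
    and eq: "\<forall>t>0. \<forall>X. inner (W t) X = - (\<mu> * inner (U t) X + \<beta> * inner (B (U t)) (B X)) - d * inner (V t) X"
    and t: "t \<ge> 0"
  shows "En \<mu> \<beta> B (U t) (V t) \<le> 3 * exp (- (2/3*\<kappa>) * t) * En \<mu> \<beta> B (U 0) (V 0)"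
proof -
  define L where "L s = En \<mu> \<beta> B (U s) (V s) + 2 * \<kappa> * inner (U s) (V s)" for s
  define \<rho> where "\<rho> = 2/3*\<kappa>"
  define g where "g s = exp (\<rho> * s) * L s" for s
  have bnd: "En \<mu> \<beta> B (U s) (V s) / 2 \<le> L s \<and> L s \<le> 3/2 * En \<mu> \<beta> B (U s) (V s)" for s
    unfolding L_def by (rule En_bounds[OF pars(1,2,4,7)])
  have cU: "continuous_on {0..} U"
    unfolding continuous_on_eq_continuous_within
  proof
    fix x :: real assume "x \<in> {0..}"
    thus "continuous (at x within {0..}) U" using dU by (intro has_vector_derivative_continuous) auto
  qed
  have cBU: "continuous_on {0..} (\<lambda>s. B (U s))"
    using continuous_on_compose[OF cU linear_continuous_on[OF B]] by (simp add: o_def)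
  have cL: "continuous_on {0..} L"
    unfolding L_def En_def using cU cV cBU by (intro continuous_intros)
  have cg: "continuous_on {0..} g" unfolding g_def using cL by (intro continuous_intros)
  have dL: "(L has_real_derivative (-2*d*inner (V s) (V s) + 2*\<kappa>*(inner (V s) (V s)
       - (\<mu> * inner (U s) (U s) + \<beta> * inner (B (U s)) (B (U s))) - d * inner (U s) (V s)))) (at s)"
    if s: "s > 0" for s
  proof -
    have hU: "(U has_vector_derivative V s) (at s)"
    proof -
      have "at s within {0..} = at s" by (rule at_within_interior) (simp add: s)
      thus ?thesis using dU s by (metis less_imp_le)
    qed
    have hV: "(V has_vector_derivative W s) (at s)" using dV s by auto
    have hBU: "((\<lambda>x. B (U x)) has_vector_derivative B (V s)) (at s)"
      by (rule bounded_linear.has_vector_derivative[OF B hU])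
    have r: "(L has_real_derivative
        ((inner (V s) (W s) + inner (W s) (V s)) + \<mu> * (inner (U s) (V s) + inner (V s) (U s))
         + \<beta> * (inner (B (U s)) (B (V s)) + inner (B (V s)) (B (U s)))
         + 2 * \<kappa> * (inner (U s) (W s) + inner (V s) (V s)))) (at s)"
      unfolding L_def[abs_def] En_def
      by (intro DERIV_add DERIV_cmult inner_deriv hU hV hBU)
    have w1: "inner (W s) (V s) = - (\<mu> * inner (U s) (V s) + \<beta> * inner (B (U s)) (B (V s))) - d * inner (V s) (V s)"
      using eq s by auto
    have w2: "inner (W s) (U s) = - (\<mu> * inner (U s) (U s) + \<beta> * inner (B (U s)) (B (U s))) - d * inner (U s) (V s)"
      using eq s by (auto simp: inner_commute)
    have c: "inner (V s) (W s) = inner (W s) (V s)" "inner (V s) (U s) = inner (U s) (V s)"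
      "inner (B (V s)) (B (U s)) = inner (B (U s)) (B (V s))" "inner (U s) (W s) = inner (W s) (U s)"
      by (simp_all add: inner_commute)
    have "((inner (V s) (W s) + inner (W s) (V s)) + \<mu> * (inner (U s) (V s) + inner (V s) (U s))
         + \<beta> * (inner (B (U s)) (B (V s)) + inner (B (V s)) (B (U s)))
         + 2 * \<kappa> * (inner (U s) (W s) + inner (V s) (V s))) = 
         (-2*d*inner (V s) (V s) + 2*\<kappa>*(inner (V s) (V s)
       - (\<mu> * inner (U s) (U s) + \<beta> * inner (B (U s)) (B (U s))) - d * inner (U s) (V s)))"
      by (rule alg_id[OF c w1 w2])
    with r show ?thesis by simp
  qed
  have dg: "\<exists>D. (g has_real_derivative D) (at s) \<and> D \<le> 0" if s: "s > 0" for s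
  proof -
    let ?D = "-2*d*inner (V s) (V s) + 2*\<kappa>*(inner (V s) (V s)
       - (\<mu> * inner (U s) (U s) + \<beta> * inner (B (U s)) (B (U s))) - d * inner (U s) (V s))"
    have "(g has_real_derivative (exp (\<rho> * s) * ?D + exp (\<rho> * s) * \<rho> * L s)) (at s)"
    proof -
      have e: "((\<lambda>x. exp (\<rho> * x)) has_real_derivative (exp (\<rho> * s) * (\<rho> * 1))) (at s)"
        by (rule DERIV_fun_exp[OF DERIV_cmult[OF DERIV_ident]])
      show ?thesis unfolding g_def[abs_def] using DERIV_mult'[OF e dL[OF s]] by simp
    qed
    moreover have "?D \<le> - \<kappa> * En \<mu> \<beta> B (U s) (V s)" by (rule deriv_bound[OF pars(1-6)])
    moreover have "\<rho> * L s \<le> \<kappa> * En \<mu> \<beta> B (U s) (V s)"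
    proof -
      have "\<rho> * L s \<le> \<rho> * (3/2 * En \<mu> \<beta> B (U s) (V s))"
        using bnd[of s] pars \<rho>_def by (intro mult_left_mono) auto
      thus ?thesis unfolding \<rho>_def by simp
    qed
    ultimately have "(g has_real_derivative (exp (\<rho> * s) * (?D + \<rho> * L s))) (at s)"
      "?D + \<rho> * L s \<le> 0"
      by (simp_all add: distrib_left mult.assoc)
    moreover have "exp (\<rho> * s) * (?D + \<rho> * L s) \<le> 0"
      using calculation(2) by (simp add: mult_nonneg_nonpos)
    ultimately show ?thesis by blast
  qed
  have gt: "g t \<le> g 0"
  proof (cases "t = 0")
    case False
    hence tp: "0 < t" using t by auto
    have "continuous_on {0..t} g" using cg by (rule continuous_on_subset) auto
    moreover have "g differentiable (at x)" if "0 < x" for x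
      using dg[OF that] real_differentiable_def by blast
    ultimately obtain l z where z: "0 < z" "z < t" "DERIV g z :> l" "g t - g 0 = (t - 0) * l"
      using MVT[OF tp, of g] by auto
    obtain D where D: "(g has_real_derivative D) (at z)" "D \<le> 0" using dg z(1) by blast
    have "l = D" using DERIV_unique[OF z(3) D(1)] .
    hence "(t - 0) * l \<le> 0" using D tp by (simp add: mult_nonneg_nonpos)
    thus ?thesis using z(4) by simp
  qed simp
  have "En \<mu> \<beta> B (U t) (V t) \<le> 2 * L t" using bnd[of t] by simp
  also have "L t = exp (- \<rho> * t) * g t" unfolding g_def by (simp add: exp_minus field_simps)
  also have "2 * (exp (- \<rho> * t) * g t) \<le> 2 * (exp (- \<rho> * t) * g 0)"
    using gt by simp
  also have "g 0 = L 0" unfolding g_def by simp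
  also have "2 * (exp (- \<rho> * t) * L 0) \<le> 2 * (exp (- \<rho> * t) * (3/2 * En \<mu> \<beta> B (U 0) (V 0)))"
    using bnd[of 0] by simp
  finally show ?thesis unfolding \<rho>_def by (simp add: mult_ac)
qed


lemma bdot_bl: "bounded_linear (bdot \<xi>)"
  unfolding bdot_def
  by (intro bounded_linear_sum bounded_linear_compose[OF bounded_linear_mult_right bounded_linear_vec_nth])

lemma inner_ofreal_left: "inner (complex_of_real c * z) w = c * inner z w"
  by (simp add: inner_complex_def algebra_simps)

lemma inner_lame:
  "inner (lame_fourier_rhs a b \<theta> \<xi> U V) X = a\<^sup>2 * (norm \<xi>)\<^sup>2 * inner U X
     + (b\<^sup>2 - a\<^sup>2) * inner (bdot \<xi> U) (bdot \<xi> X) + frac_symbol \<theta> \<xi> * inner V X"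
proof -
  have "inner (bdot \<xi> U) (bdot \<xi> X) = (\<Sum>i\<in>UNIV. \<xi> $ i * inner (bdot \<xi> U) (X $ i))"
  proof -
    have "inner (bdot \<xi> U) (bdot \<xi> X) = (\<Sum>i\<in>UNIV. inner (bdot \<xi> U) (complex_of_real (\<xi> $ i) * X $ i))"
      by (simp add: bdot_def[of \<xi> X] inner_sum_right)
    also have "\<dots> = (\<Sum>i\<in>UNIV. \<xi> $ i * inner (bdot \<xi> U) (X $ i))"
      by (intro sum.cong refl) (metis inner_commute inner_ofreal_left)
    finally show ?thesis .
  qed
  moreover have "inner (lame_fourier_rhs a b \<theta> \<xi> U V $ i) (X $ i) = a\<^sup>2 * (norm \<xi>)\<^sup>2 * inner (U $ i) (X $ i)
     + (b\<^sup>2 - a\<^sup>2) * (\<xi> $ i * inner (bdot \<xi> U) (X $ i)) + frac_symbol \<theta> \<xi> * inner (V $ i) (X $ i)" for i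
    unfolding lame_fourier_rhs_def vec_lambda_beta inner_add_left inner_ofreal_left by (simp only: mult.assoc)
  ultimately show ?thesis
    unfolding inner_vec_def[of "lame_fourier_rhs a b \<theta> \<xi> U V"] inner_vec_def[of U] inner_vec_def[of V]
    by (simp only: sum.distrib sum_distrib_left)
qed

lemma Epha_En: "E_pha a b \<xi> U V = En (a\<^sup>2 * (norm \<xi>)\<^sup>2) (b\<^sup>2 - a\<^sup>2) (bdot \<xi>) U V"
  unfolding E_pha_def En_def by (simp add: power2_norm_eq_inner)

lemma En_nonneg: "0 \<le> \<mu> \<Longrightarrow> 0 \<le> \<beta> \<Longrightarrow> 0 \<le> En \<mu> \<beta> B u v"
  unfolding En_def by simp

lemma frac_pos: "0 < norm \<xi> \<Longrightarrow> frac_symbol \<theta> \<xi> = norm \<xi> powr (2*\<theta>)"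
  unfolding frac_symbol_def by auto

lemma kappa_lb:
  fixes r d A0 P :: real
  assumes r: "0 < r" and d: "d = r powr (2*\<theta>)" and A0: "A0 \<le> 1/2" "A0 \<le> \<bar>a\<bar>/2" "A0 \<le> a\<^sup>2/2" "0 \<le> A0"
    and P: "0 \<le> P" "P \<le> r powr (2*\<theta>)" "P \<le> r" "P \<le> r powr (2 - 2*\<theta>)"
  shows "A0 * P \<le> min (d/2) (min (sqrt (a\<^sup>2 * r\<^sup>2) / 2) (a\<^sup>2 * r\<^sup>2 / (2*d)))"
proof -
  have dp: "d > 0" using d r by simp
  have s: "sqrt (a\<^sup>2 * r\<^sup>2) = \<bar>a\<bar> * r" using r by (simp add: real_sqrt_mult)
  have q: "a\<^sup>2 * r\<^sup>2 / (2*d) = a\<^sup>2 * r powr (2 - 2*\<theta>) / 2"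
  proof -
    have "r powr (2 - 2*\<theta>) = r powr 2 / d" unfolding d by (rule powr_diff)
    also have "r powr 2 = r\<^sup>2" using r by simp
    finally show ?thesis by simp
  qed
  have "A0 * P \<le> 1/2 * d" using A0 P d by (intro mult_mono) auto
  moreover have "A0 * P \<le> \<bar>a\<bar>/2 * r" using A0 P by (intro mult_mono) auto
  moreover have "A0 * P \<le> a\<^sup>2/2 * r powr (2 - 2*\<theta>)" using A0 P by (intro mult_mono) auto
  ultimately show ?thesis unfolding s q min.bounded_iff by simp
qed

lemma powr_ge_eps:
  fixes r e \<epsilon> :: real
  assumes "0 < \<epsilon>" "\<epsilon> \<le> 1" "\<epsilon> \<le> r" "0 \<le> e" "e \<le> 2"
  shows "\<epsilon>\<^sup>2 \<le> r powr e"
proof (cases "r \<ge> 1")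
  case True
  have "\<epsilon>\<^sup>2 \<le> 1" using assms by (simp add: power_le_one)
  also have "1 \<le> r powr e" using True assms by (simp add: ge_one_powr_ge_zero)
  finally show ?thesis .
next
  case False
  have "\<epsilon>\<^sup>2 \<le> r\<^sup>2" using assms by (intro power_mono) auto
  also have "r\<^sup>2 = r powr 2" using assms by (simp add: powr_numeral)
  also have "r powr 2 \<le> r powr e" using False assms by (intro powr_mono') auto
  finally show ?thesis .
qed

theorem lemma3p1:
  fixes a b \<theta> :: real
  assumes ab: "b\<^sup>2 > a\<^sup>2" "a\<^sup>2 > 0"
    and \<theta>: "0 \<le> \<theta>" "\<theta> \<le> 1"
  shows "\<exists>\<epsilon>0>0. \<forall>\<epsilon>. 0 < \<epsilon> \<and> \<epsilon> \<le> \<epsilon>0 \<longrightarrow>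
    (\<exists>c>0. \<exists>C>0. \<forall>(\<xi>::real^3) (U::real \<Rightarrow> complex^3) V W.
      ((\<forall>t\<ge>0. (U has_vector_derivative V t) (at t within {0..}))
       \<and> continuous_on {0..} V
       \<and> (\<forall>t>0. (V has_vector_derivative W t) (at t))
       \<and> (\<forall>t>0. W t + lame_fourier_rhs a b \<theta> \<xi> (U t) (V t) = 0))
      \<longrightarrow> (\<forall>t\<ge>0.
            (norm \<xi> < \<epsilon> \<longrightarrow>
               E_pha a b \<xi> (U t) (V t)
                 \<le> C * exp (- c * norm \<xi> powr (2 * max (1 - \<theta>) \<theta>) * t) * E_pha a b \<xi> (U 0) (V 0))
          \<and> (norm \<xi> \<ge> \<epsilon> \<longrightarrow>
               E_pha a b \<xi> (U t) (V t) \<le> C * exp (- c * t) * E_pha a b \<xi> (U 0) (V 0))))"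
proof -
  define A0 where "A0 = min 1 (min \<bar>a\<bar> (a\<^sup>2)) / 2"
  have a0: "a \<noteq> 0" using ab by auto
  have A0: "A0 \<le> 1/2" "A0 \<le> \<bar>a\<bar>/2" "A0 \<le> a\<^sup>2/2" "0 < A0" unfolding A0_def using a0 by auto
  show ?thesis
  proof (rule exI[of _ 1], intro conjI allI impI)
    show "(0::real) < 1" by simp
  next
    fix \<epsilon> :: real assume e: "0 < \<epsilon> \<and> \<epsilon> \<le> 1"
    define c where "c = 2/3 * A0 * \<epsilon>\<^sup>2"
    have cpos: "0 < c" unfolding c_def using A0 e by simp
    show "\<exists>c>0. \<exists>C>0. \<forall>(\<xi>::real^3) (U::real \<Rightarrow> complex^3) V W.
      ((\<forall>t\<ge>0. (U has_vector_derivative V t) (at t within {0..}))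
       \<and> continuous_on {0..} V
       \<and> (\<forall>t>0. (V has_vector_derivative W t) (at t))
       \<and> (\<forall>t>0. W t + lame_fourier_rhs a b \<theta> \<xi> (U t) (V t) = 0))
      \<longrightarrow> (\<forall>t\<ge>0.
            (norm \<xi> < \<epsilon> \<longrightarrow>
               E_pha a b \<xi> (U t) (V t)
                 \<le> C * exp (- c * norm \<xi> powr (2 * max (1 - \<theta>) \<theta>) * t) * E_pha a b \<xi> (U 0) (V 0))
          \<and> (norm \<xi> \<ge> \<epsilon> \<longrightarrow>
               E_pha a b \<xi> (U t) (V t) \<le> C * exp (- c * t) * E_pha a b \<xi> (U 0) (V 0)))"
    proof (rule exI[of _ c], rule conjI[OF cpos], rule exI[of _ "3::real"], rule conjI, simp, intro allI impI conjI)
      fix \<xi> :: "real^3" and U :: "real \<Rightarrow> complex^3" and V W and t :: real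
      assume H: "(\<forall>t\<ge>0. (U has_vector_derivative V t) (at t within {0..}))
       \<and> continuous_on {0..} V
       \<and> (\<forall>t>0. (V has_vector_derivative W t) (at t))
       \<and> (\<forall>t>0. W t + lame_fourier_rhs a b \<theta> \<xi> (U t) (V t) = 0)"
      assume t: "0 \<le> t"
      define r where "r = norm \<xi>"
      define \<mu> where "\<mu> = a\<^sup>2 * r\<^sup>2"
      define \<beta> where "\<beta> = b\<^sup>2 - a\<^sup>2"
      define d where "d = frac_symbol \<theta> \<xi>"
      define \<kappa> where "\<kappa> = min (d/2) (min (sqrt \<mu> / 2) (\<mu> / (2*d)))"
      have r0: "0 \<le> r" unfolding r_def by simp
      have mu0: "0 \<le> \<mu>" "0 \<le> \<beta>" unfolding \<mu>_def \<beta>_def using ab by auto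
      have d0: "0 \<le> d" unfolding d_def frac_symbol_def by auto
      have k0: "0 \<le> \<kappa>" unfolding \<kappa>_def using d0 mu0 by auto
      have k1: "\<kappa> \<le> d/2" "\<kappa> \<le> sqrt \<mu> / 2" unfolding \<kappa>_def by auto
      have k2: "2*\<kappa>*d \<le> \<mu>"
      proof (cases "d = 0")
        case True thus ?thesis using mu0 by simp
      next
        case False
        have "\<kappa> \<le> \<mu> / (2*d)" unfolding \<kappa>_def by auto
        hence "\<kappa> * (2*d) \<le> \<mu>" using False d0 by (simp add: field_simps)
        thus ?thesis by (simp add: mult_ac)
      qed
      have eq: "\<forall>t>0. \<forall>X. inner (W t) X = - (\<mu> * inner (U t) X + \<beta> * inner (bdot \<xi> (U t)) (bdot \<xi> X)) - d * inner (V t) X"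
      proof (intro allI impI)
        fix s X assume "(0::real) < s"
        hence "W s = - lame_fourier_rhs a b \<theta> \<xi> (U s) (V s)" using H by (simp add: eq_neg_iff_add_eq_0)
        thus "inner (W s) X = - (\<mu> * inner (U s) X + \<beta> * inner (bdot \<xi> (U s)) (bdot \<xi> X)) - d * inner (V s) X"
          unfolding \<mu>_def \<beta>_def d_def r_def by (simp add: inner_lame)
      qed
      have H1: "\<forall>t\<ge>0. (U has_vector_derivative V t) (at t within {0..})" using H by blast
      have H2: "continuous_on {0..} V" using H by blast
      have H3: "\<forall>t>0. (V has_vector_derivative W t) (at t)" using H by blast
      have dec: "E_pha a b \<xi> (U t) (V t) \<le> 3 * exp (- (2/3*\<kappa>) * t) * E_pha a b \<xi> (U 0) (V 0)"
        unfolding Epha_En \<mu>_def[symmetric, unfolded r_def] \<beta>_def[symmetric]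
        using decay[OF bdot_bl mu0 d0 k0 k1(1) k2 k1(2) H1 H2 H3 eq t] .
      have E0: "0 \<le> E_pha a b \<xi> (U 0) (V 0)" unfolding Epha_En
        using En_nonneg[OF mu0] unfolding \<mu>_def \<beta>_def r_def .
      have mono: "3 * exp (- (2/3*\<kappa>) * t) * E_pha a b \<xi> (U 0) (V 0) \<le> 3 * exp (- R * t) * E_pha a b \<xi> (U 0) (V 0)"
        if "R \<le> 2/3*\<kappa>" for R
      proof -
        have "R * t \<le> 2/3*\<kappa> * t" using that t by (intro mult_right_mono) auto
        hence "exp (- (2/3*\<kappa>) * t) \<le> exp (- R * t)" by simp
        thus ?thesis using E0 by (intro mult_right_mono mult_left_mono) auto
      qed
      have mm: "1 \<le> 2 * max (1 - \<theta>) \<theta>" "2 * max (1 - \<theta>) \<theta> \<le> 2" "2*\<theta> \<le> 2 * max (1 - \<theta>) \<theta>"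
        "2 - 2*\<theta> \<le> 2 * max (1 - \<theta>) \<theta>" using \<theta> by (auto simp: max_def)
      show "norm \<xi> < \<epsilon> \<Longrightarrow> E_pha a b \<xi> (U t) (V t)
                 \<le> 3 * exp (- c * norm \<xi> powr (2 * max (1 - \<theta>) \<theta>) * t) * E_pha a b \<xi> (U 0) (V 0)"
      proof -
        assume small: "norm \<xi> < \<epsilon>"
        define P where "P = r powr (2 * max (1 - \<theta>) \<theta>)"
        have P0: "0 \<le> P" unfolding P_def by simp
        have "A0 * P \<le> \<kappa>"
        proof (cases "r = 0")
          case True thus ?thesis using k0 unfolding P_def by simp
        next
          case False
          hence rp: "0 < r" using r0 by simp
          have r1: "r \<le> 1" using small e unfolding r_def by simp
          show ?thesis unfolding \<kappa>_def \<mu>_def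
          proof (rule kappa_lb[OF rp _ A0(1-3) less_imp_le[OF A0(4)] P0])
            show "d = r powr (2*\<theta>)" unfolding d_def r_def using rp frac_pos unfolding r_def by blast
            show "P \<le> r powr (2*\<theta>)" unfolding P_def using mm rp r1 by (intro powr_mono') auto
            have "P \<le> r powr 1" unfolding P_def using mm rp r1 by (intro powr_mono') auto
            thus "P \<le> r" using rp by simp
            show "P \<le> r powr (2 - 2*\<theta>)" unfolding P_def using mm rp r1 by (intro powr_mono') auto
          qed
        qed
        moreover have "\<epsilon>\<^sup>2 * (A0 * P) \<le> 1 * (A0 * P)"
          using e A0 P0 by (intro mult_right_mono) (auto simp: power_le_one)
        ultimately have "c * P \<le> 2/3*\<kappa>" unfolding c_def by (simp add: mult_ac)
        thus ?thesis using dec mono[of "c * P"] unfolding P_def r_def by (simp add: mult_ac)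
      qed
      show "norm \<xi> \<ge> \<epsilon> \<Longrightarrow> E_pha a b \<xi> (U t) (V t) \<le> 3 * exp (- c * t) * E_pha a b \<xi> (U 0) (V 0)"
      proof -
        assume large: "norm \<xi> \<ge> \<epsilon>"
        have rp: "0 < r" "\<epsilon> \<le> r" using e large unfolding r_def by auto
        have "A0 * \<epsilon>\<^sup>2 \<le> \<kappa>" unfolding \<kappa>_def \<mu>_def
        proof (rule kappa_lb[OF rp(1) _ A0(1-3) less_imp_le[OF A0(4)]])
          show "d = r powr (2*\<theta>)" unfolding d_def r_def using rp frac_pos unfolding r_def by blast
          show "0 \<le> \<epsilon>\<^sup>2" by simp
          show "\<epsilon>\<^sup>2 \<le> r powr (2*\<theta>)" using e rp \<theta> by (intro powr_ge_eps) auto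
          show "\<epsilon>\<^sup>2 \<le> r powr (2 - 2*\<theta>)" using e rp \<theta> by (intro powr_ge_eps) auto
          have "\<epsilon>\<^sup>2 \<le> \<epsilon> * 1" unfolding power2_eq_square using e by (intro mult_left_mono) auto
          thus "\<epsilon>\<^sup>2 \<le> r" using rp by simp
        qed
        hence "c \<le> 2/3*\<kappa>" unfolding c_def by (simp add: mult_ac)
        thus ?thesis using dec mono[of c] by simp
      qed
    qed
  qed
qed

end
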